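(* Let $(\mathcal A,\phi)$ be a noncommutative probability space with an exchangeability system whose copies are indexed by $k\in\{0,1,2,\dots\}$, and let $X_1,\dots,X_n\in\mathcal A$. Then $$\phi(X_1X_2\cdots X_n)=\sum_{\substack{A\subseteq[n]\\ 1\in A}}\frac{1}{|A|}\,\tilde\phi(X_1^{A,\omega}X_2^{A,\omega}\cdots X_n^{A,\omega}),$$ where for each $A$, $\omega$ is a primitive root of unity of order $|A|$ and $X_j^{A,\omega}=\sum_{k=1}^{|A|}\omega^kX_j^{(k)}$ if $j\in A$, and $X_j^{A,\omega}=X_j^{(0)}$ if $j\notin A$.
   Context: A noncommutative probability space is a pair $(\mathcal A,\phi)$ of a complex unital algebra $\mathcal A$ and a unital linear functional $\phi$. An exchangeability system for $(\mathcal A,\phi)$ here consists of a noncommutative probability space $(\mathcal U,\tilde\phi)$ and a family $(\iota_k)_{k\ge0}$ of embeddings (injective unital algebra homomorphisms) $\iota_k:\mathcal A\to\mathcal U$ with $\tilde\phi\circ\iota_k=\phi$; write $X^{(k)}=\iota_k(X)$. It is required that for all $X_1,\dots,X_n\in\mathcal A$, all indices $i_1,\dots,i_n\ge0$ and every bijection $\sigma$ of $\{0,1,2,\dots\}$, $\tilde\phi(X_1^{(i_1)}\cdots X_n^{(i_n)})=\tilde\phi(X_1^{(\sigma(i_1))}\cdots X_n^{(\sigma(i_n))})$. *)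

theory Defs
  imports Complex_Main
begin

definition complex_unital_algebra :: "(complex \<Rightarrow> 'a::ring_1 \<Rightarrow> 'a) \<Rightarrow> bool" where
  "complex_unital_algebra sc \<longleftrightarrow> vector_space sc \<and>
     (\<forall>c a b. sc c (a * b) = sc c a * b \<and> sc c (a * b) = a * sc c b)"

definition nc_prob_space :: "(complex \<Rightarrow> 'a::ring_1 \<Rightarrow> 'a) \<Rightarrow> ('a \<Rightarrow> complex) \<Rightarrow> bool" where
  "nc_prob_space sc phi \<longleftrightarrow> complex_unital_algebra sc \<and> Vector_Spaces.linear sc (*) phi \<and> phi 1 = 1"

definition unital_alg_embedding ::
  "(complex \<Rightarrow> 'a::ring_1 \<Rightarrow> 'a) \<Rightarrow> (complex \<Rightarrow> 'u::ring_1 \<Rightarrow> 'u) \<Rightarrow> ('a \<Rightarrow> 'u) \<Rightarrow> bool" where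
  "unital_alg_embedding scA scU f \<longleftrightarrow> Vector_Spaces.linear scA scU f \<and>
     (\<forall>a b. f (a * b) = f a * f b) \<and> f 1 = 1 \<and> inj f"

definition exchangeability_system ::
  "(complex \<Rightarrow> 'a::ring_1 \<Rightarrow> 'a) \<Rightarrow> ('a \<Rightarrow> complex) \<Rightarrow>
   (complex \<Rightarrow> 'u::ring_1 \<Rightarrow> 'u) \<Rightarrow> ('u \<Rightarrow> complex) \<Rightarrow> (nat \<Rightarrow> 'a \<Rightarrow> 'u) \<Rightarrow> bool" where
  "exchangeability_system scA phi scU phit iota \<longleftrightarrow>
     nc_prob_space scU phit \<and>
     (\<forall>k. unital_alg_embedding scA scU (iota k) \<and> phit \<circ> iota k = phi) \<and>
     (\<forall>(n::nat) (X::nat \<Rightarrow> 'a) (i::nat \<Rightarrow> nat) (\<sigma>::nat \<Rightarrow> nat). bij \<sigma> \<longrightarrow>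
        phit (prod_list (map (\<lambda>j. iota (i j) (X j)) [0..<n])) =
        phit (prod_list (map (\<lambda>j. iota (\<sigma> (i j)) (X j)) [0..<n])))"

definition primitive_root_unity :: "nat \<Rightarrow> complex \<Rightarrow> bool" where
  "primitive_root_unity m w \<longleftrightarrow> w ^ m = 1 \<and> (\<forall>k. 0 < k \<and> k < m \<longrightarrow> w ^ k \<noteq> 1)"

definition XA :: "(complex \<Rightarrow> 'u \<Rightarrow> 'u::ring_1) \<Rightarrow> (nat \<Rightarrow> 'a \<Rightarrow> 'u) \<Rightarrow> nat set \<Rightarrow> complex \<Rightarrow> 'a \<Rightarrow> nat \<Rightarrow> 'u" where
  "XA scU iota A w x j = (if j \<in> A then (\<Sum>k = 1..card A. scU (w ^ k) (iota k x)) else iota 0 x)"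

end

theory Submission
  imports Defs "HOL-Library.FuncSet"
begin


lemma bij_extend_nat:
  fixes f :: "nat \<Rightarrow> nat"
  assumes fin: "finite F" and inj: "inj_on f F"
  shows "\<exists>\<sigma>. bij \<sigma> \<and> (\<forall>x\<in>F. \<sigma> x = f x)"
proof -
  define U where "U = F \<union> f ` F"
  have finU: "finite U" using fin by (simp add: U_def)
  have c1: "card (U - F) = card U - card F" using fin finU by (simp add: U_def card_Diff_subset)
  have c2: "card (U - f ` F) = card U - card F"
    using fin finU inj by (simp add: U_def card_Diff_subset card_image)
  obtain h where h: "bij_betw h (U - F) (U - f ` F)"
    using finite_same_card_bij[of "U - F" "U - f ` F"] finU c1 c2 by auto
  define \<sigma> where "\<sigma> x = (if x \<in> F then f x else if x \<in> U then h x else x)" for x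
  have b1: "bij_betw \<sigma> F (f ` F)"
    using inj by (auto simp: bij_betw_def \<sigma>_def inj_on_def)
  have b2: "bij_betw \<sigma> (U - F) (U - f ` F)"
    using h by (rule bij_betw_cong[THEN iffD1, rotated]) (auto simp: \<sigma>_def)
  have b3: "bij_betw \<sigma> (- U) (- U)"
    by (auto simp: bij_betw_def \<sigma>_def inj_on_def U_def image_iff)
  have "bij_betw \<sigma> (F \<union> (U - F)) (f ` F \<union> (U - f ` F))"
    by (rule bij_betw_combine[OF b1 b2]) auto
  hence "bij_betw \<sigma> ((F \<union> (U - F)) \<union> - U) ((f ` F \<union> (U - f ` F)) \<union> - U)"
    by (rule bij_betw_combine[OF _ b3]) (auto simp: U_def)
  moreover have "(F \<union> (U - F)) \<union> - U = UNIV" "(f ` F \<union> (U - f ` F)) \<union> - U = UNIV"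
    by (auto simp: U_def)
  ultimately have "bij \<sigma>" by simp
  thus ?thesis by (auto simp: \<sigma>_def)
qed

lemma prod_list_sum_expand:
  fixes f :: "nat \<Rightarrow> nat \<Rightarrow> 'u::ring_1"
  assumes "distinct js"
  shows "prod_list (map (\<lambda>j. \<Sum>k\<in>S j. f j k) js) =
    (\<Sum>\<kappa>\<in>PiE (set js) S. prod_list (map (\<lambda>j. f j (\<kappa> j)) js))"
  using assms
proof (induction js)
  case Nil
  then show ?case by simp
next
  case (Cons j js)
  have "j \<notin> set js" using Cons by simp
  have "(\<Sum>\<kappa>\<in>PiE (set (j # js)) S. prod_list (map (\<lambda>i. f i (\<kappa> i)) (j # js)))
     = (\<Sum>p\<in>S j \<times> PiE (set js) S. prod_list (map (\<lambda>i. f i (((\<lambda>(y, g). g(j := y)) p) i)) (j # js)))"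
    unfolding set_simps PiE_insert_eq
    by (subst sum.reindex) (auto intro: inj_combinator[OF \<open>j \<notin> set js\<close>])
  also have "\<dots> = (\<Sum>p\<in>S j \<times> PiE (set js) S. f j (fst p) * prod_list (map (\<lambda>i. f i (snd p i)) js))"
  proof (rule sum.cong[OF refl])
    fix p assume "p \<in> S j \<times> PiE (set js) S"
    obtain a b where p: "p = (a, b)" by (cases p)
    show "prod_list (map (\<lambda>i. f i (((\<lambda>(y, g). g(j := y)) p) i)) (j # js)) = f j (fst p) * prod_list (map (\<lambda>i. f i (snd p i)) js)"
      using \<open>j \<notin> set js\<close> unfolding p
      by (simp, intro arg_cong[where f="\<lambda>x. f j a * prod_list x"] map_cong) auto
  qed
  also have "\<dots> = (\<Sum>k\<in>S j. \<Sum>\<kappa>\<in>PiE (set js) S. f j k * prod_list (map (\<lambda>i. f i (\<kappa> i)) js))"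
    by (subst sum.cartesian_product) (simp add: case_prod_beta)
  also have "\<dots> = (\<Sum>k\<in>S j. f j k) * (\<Sum>\<kappa>\<in>PiE (set js) S. prod_list (map (\<lambda>i. f i (\<kappa> i)) js))"
    by (simp add: sum_distrib_left sum_distrib_right sum.swap[of _ "S j"])
  finally show ?case using Cons by simp
qed



definition InjF :: "'b set \<Rightarrow> nat \<Rightarrow> ('b \<Rightarrow> nat) set" where
  "InjF T m = {c \<in> PiE T (\<lambda>_. {1..m}). inj_on c T}"

lemma finite_InjF: "finite T \<Longrightarrow> finite (InjF T m)"
  unfolding InjF_def by (rule finite_subset[OF _ finite_PiE[of T "\<lambda>_. {1..m}"]]) auto

lemma InjF_insert_sum:
  fixes F :: "('b \<Rightarrow> nat) \<Rightarrow> 'c::comm_monoid_add"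
  assumes "x \<notin> T" "finite T"
  shows "sum F (InjF (insert x T) m) = (\<Sum>c\<in>InjF T m. \<Sum>v\<in>{1..m} - c ` T. F (c(x := v)))"
proof -
  have "(\<Sum>c\<in>InjF T m. \<Sum>v\<in>{1..m} - c ` T. F (c(x := v))) =
        (\<Sum>p\<in>Sigma (InjF T m) (\<lambda>c. {1..m} - c ` T). F ((fst p)(x := snd p)))"
    by (subst sum.Sigma) (auto simp: finite_InjF assms case_prod_beta)
  also have "\<dots> = sum F (InjF (insert x T) m)"
  proof (rule sum.reindex_bij_witness[where i="\<lambda>c. (c(x := undefined), c x)" and j="\<lambda>p. (fst p)(x := snd p)"])
    fix p assume p: "p \<in> Sigma (InjF T m) (\<lambda>c. {1..m} - c ` T)"
    then have "fst p x = undefined" using assms(1) by (auto simp: InjF_def PiE_def extensional_def)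
    then show "(((fst p)(x := snd p))(x := undefined), ((fst p)(x := snd p)) x) = p"
      by (cases p) auto
    obtain c v where pcv: "p = (c, v)" by (cases p)
    have c: "c \<in> PiE T (\<lambda>_. {1..m})" "inj_on c T" and v: "v \<in> {1..m}" "v \<notin> c ` T"
      using p by (auto simp: pcv InjF_def)
    have "c(x := v) \<in> PiE (insert x T) (\<lambda>_. {1..m})" by (rule PiE_fun_upd[OF v(1) c(1)])
    moreover have "inj_on (c(x := v)) T" using c(2) v(2) assms(1)
      by (metis fun_upd_other image_cong inj_on_cong)
    moreover have "(c(x := v)) ` T = c ` T" using assms(1) by auto
    ultimately show "(fst p)(x := snd p) \<in> InjF (insert x T) m"
      using v(2) assms(1) by (simp add: pcv InjF_def)
    show "F ((fst p)(x := snd p)) = F ((fst p)(x := snd p))" by simp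
  next
    fix c assume c: "c \<in> InjF (insert x T) m"
    show "(fst (c(x := undefined), c x))(x := snd (c(x := undefined), c x)) = c" by simp
    have "c x \<notin> c ` T" using c assms(1) by (auto simp: InjF_def inj_on_def)
    moreover have "c(x := undefined) \<in> PiE T (\<lambda>_. {1..m})"
      using c assms(1) by (intro fun_upd_in_PiE) (auto simp: InjF_def)
    moreover have "inj_on (c(x := undefined)) T"
      using c assms(1) by (auto simp: InjF_def inj_on_def)
    moreover have "(c(x := undefined)) ` T = c ` T" using assms(1) by auto
    moreover have "c x \<in> {1..m}" using c by (auto simp: InjF_def PiE_def Pi_def)
    ultimately show "(c(x := undefined), c x) \<in> Sigma (InjF T m) (\<lambda>c. {1..m} - c ` T)"
      by (simp add: InjF_def)
  qed
  finally show ?thesis by simp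
qed

lemma geom_root_zero:
  assumes "primitive_root_unity m \<omega>" "0 < k" "k < m"
  shows "(\<Sum>v\<in>{1..m}. (\<omega> ^ k) ^ v) = 0"
proof -
  have ne: "\<omega> ^ k \<noteq> 1" using assms unfolding primitive_root_unity_def by auto
  have m1: "(\<omega> ^ k) ^ m = 1" using assms unfolding primitive_root_unity_def
    by (metis mult.commute power_mult power_one)
  have "(\<Sum>v\<in>{1..m}. (\<omega> ^ k) ^ v) = (\<Sum>v<m. (\<omega> ^ k) ^ Suc v)"
    by (simp add: sum.atLeast1_atMost_eq)
  also have "\<dots> = \<omega> ^ k * (\<Sum>v<m. (\<omega> ^ k) ^ v)" by (simp add: sum_distrib_left)
  also have "\<dots> = 0" using ne m1 by (simp add: geometric_sum)
  finally show ?thesis .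
qed

lemma G_formula:
  assumes prim: "primitive_root_unity m \<omega>"
  shows "finite T \<Longrightarrow> card T = Suc r \<Longrightarrow> (\<forall>t\<in>T. 0 < b t) \<Longrightarrow> (\<Sum>t\<in>T. b t) = m \<Longrightarrow>
    (\<Sum>c\<in>InjF T m. \<omega> ^ (\<Sum>t\<in>T. b t * c t)) = (-1) ^ r * fact r * of_nat m"
proof (induction r arbitrary: T b)
  case 0
  then obtain x where T: "T = {x}" by (auto simp: card_Suc_eq)
  with 0 have bx: "b x = m" by simp
  have "InjF T m = PiE {x} (\<lambda>_. {1..m})" by (auto simp: InjF_def T)
  moreover have "\<omega> ^ m = 1" using prim by (simp add: primitive_root_unity_def)
  ultimately have "(\<Sum>c\<in>InjF T m. \<omega> ^ (\<Sum>t\<in>T. b t * c t)) = of_nat (card (PiE {x} (\<lambda>_. {1..m::nat})))"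
    by (simp add: T bx power_mult)
  also have "\<dots> = of_nat m" by (simp add: card_PiE)
  finally show ?case by simp
next
  case (Suc r)
  from Suc.prems obtain x T' where T: "T = insert x T'" and xT: "x \<notin> T'" and cT': "card T' = Suc r"
    by (metis card_Suc_eq)
  have finT': "finite T'" using Suc.prems T by simp
  have T'ne: "T' \<noteq> {}" using cT' by auto
  have sumT: "b x + (\<Sum>t\<in>T'. b t) = m" using Suc.prems T xT finT' by simp
  have "(\<Sum>t\<in>T'. b t) > 0" using T'ne finT' Suc.prems T
    by (metis insert_iff sum_pos)
  hence bxm: "0 < b x" "b x < m" using sumT Suc.prems T by auto
  define s where "s c = (\<Sum>t\<in>T'. b t * c t)" for c :: "'a \<Rightarrow> nat"
  have "(\<Sum>c\<in>InjF T m. \<omega> ^ (\<Sum>t\<in>T. b t * c t)) =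
        (\<Sum>c\<in>InjF T' m. \<Sum>v\<in>{1..m} - c ` T'. \<omega> ^ (\<Sum>t\<in>T. b t * (c(x := v)) t))"
    unfolding T by (rule InjF_insert_sum[OF xT finT'])
  also have "\<dots> = (\<Sum>c\<in>InjF T' m. \<omega> ^ s c * (\<Sum>v\<in>{1..m} - c ` T'. (\<omega> ^ b x) ^ v))"
  proof (rule sum.cong[OF refl])
    fix c assume "c \<in> InjF T' m"
    have "(\<Sum>t\<in>T. b t * (c(x := v)) t) = b x * v + s c" for v
    proof -
      have "(\<Sum>t\<in>T'. b t * (c(x := v)) t) = s c" unfolding s_def
        by (rule sum.cong) (use xT in auto)
      thus ?thesis using T xT finT' by simp
    qed
    moreover have "\<omega> ^ (b x * v + s c) = \<omega> ^ s c * (\<omega> ^ b x) ^ v" for v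
      unfolding power_add power_mult by (rule mult.commute)
    ultimately show "(\<Sum>v\<in>{1..m} - c ` T'. \<omega> ^ (\<Sum>t\<in>T. b t * (c(x := v)) t)) =
          \<omega> ^ s c * (\<Sum>v\<in>{1..m} - c ` T'. (\<omega> ^ b x) ^ v)"
      by (simp only: sum_distrib_left)
  qed
  also have "\<dots> = (\<Sum>c\<in>InjF T' m. - (\<Sum>t\<in>T'. \<omega> ^ s c * (\<omega> ^ b x) ^ c t))"
  proof (rule sum.cong[OF refl])
    fix c assume c: "c \<in> InjF T' m"
    have sub: "c ` T' \<subseteq> {1..m}" using c by (auto simp: InjF_def PiE_def Pi_def)
    have inj: "inj_on c T'" using c by (simp add: InjF_def)
    have "(\<Sum>v\<in>{1..m} - c ` T'. (\<omega> ^ b x) ^ v) = (\<Sum>v\<in>{1..m}. (\<omega> ^ b x) ^ v) - (\<Sum>v\<in>c ` T'. (\<omega> ^ b x) ^ v)"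
      by (rule sum_diff[OF _ sub]) simp
    also have "\<dots> = - (\<Sum>t\<in>T'. (\<omega> ^ b x) ^ c t)"
      using geom_root_zero[OF prim bxm] by (simp add: sum.reindex[OF inj])
    finally show "\<omega> ^ s c * (\<Sum>v\<in>{1..m} - c ` T'. (\<omega> ^ b x) ^ v) = - (\<Sum>t\<in>T'. \<omega> ^ s c * (\<omega> ^ b x) ^ c t)"
      by (simp add: sum_distrib_left)
  qed
  also have "\<dots> = - (\<Sum>t\<in>T'. \<Sum>c\<in>InjF T' m. \<omega> ^ (\<Sum>u\<in>T'. (b(t := b t + b x)) u * c u))"
  proof -
    have "\<omega> ^ s c * (\<omega> ^ b x) ^ c t = \<omega> ^ (\<Sum>u\<in>T'. (b(t := b t + b x)) u * c u)" if "t \<in> T'" for t c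
    proof -
      have "(\<Sum>u\<in>T'. (b(t := b t + b x)) u * c u) = (\<Sum>u\<in>T'. b u * c u + (if u = t then b x * c u else 0))"
        by (rule sum.cong) (auto simp: algebra_simps)
      also have "\<dots> = s c + b x * c t" using that finT' by (simp add: sum.distrib s_def)
      finally show ?thesis by (simp add: power_add power_mult)
    qed
    thus ?thesis by (simp add: sum_negf sum.swap[of _ T'])
  qed
  also have "\<dots> = - (\<Sum>t\<in>T'. (-1) ^ r * fact r * of_nat m)"
  proof -
    have "(\<Sum>c\<in>InjF T' m. \<omega> ^ (\<Sum>u\<in>T'. (b(t := b t + b x)) u * c u)) = (-1) ^ r * fact r * of_nat m"
      if "t \<in> T'" for t
    proof (rule Suc.IH[OF finT' cT'])
      show "\<forall>u\<in>T'. 0 < (b(t := b t + b x)) u" using Suc.prems T by auto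
      have "(\<Sum>u\<in>T'. (b(t := b t + b x)) u) = (\<Sum>u\<in>T'. b u + (if u = t then b x else 0))"
        by (rule sum.cong) auto
      also have "\<dots> = (\<Sum>u\<in>T'. b u) + b x" using that finT' by (simp add: sum.distrib)
      finally show "(\<Sum>u\<in>T'. (b(t := b t + b x)) u) = m" using sumT by simp
    qed
    thus ?thesis by simp
  qed
  also have "\<dots> = (-1) ^ Suc r * fact (Suc r) * of_nat m"
    using cT' by (simp add: algebra_simps)
  finally show ?case .
qed



definition blk :: "(nat \<Rightarrow> nat) \<Rightarrow> nat set \<Rightarrow> nat \<Rightarrow> nat set" where
  "blk k0 I j = {i \<in> I. k0 i = k0 j}"

definition SA :: "nat set \<Rightarrow> nat \<Rightarrow> nat set" where
  "SA A j = (if j \<in> A then {1..card A} else {0})"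

definition kerEq :: "nat set \<Rightarrow> (nat \<Rightarrow> nat) \<Rightarrow> (nat \<Rightarrow> nat) \<Rightarrow> bool" where
  "kerEq I k k0 \<longleftrightarrow> (\<forall>i\<in>I. \<forall>j\<in>I. (k i = k j) = (k0 i = k0 j))"

lemma blk_eq_iff: "i \<in> I \<Longrightarrow> j \<in> I \<Longrightarrow> blk k0 I i = blk k0 I j \<longleftrightarrow> k0 i = k0 j"
  unfolding blk_def by auto

lemma blk_self: "j \<in> I \<Longrightarrow> j \<in> blk k0 I j"
  unfolding blk_def by auto

lemma E_good:
  fixes k0 :: "nat \<Rightarrow> nat" and w :: complex
  assumes finI: "finite I" and AI: "A \<subseteq> I" and Ane: "A \<noteq> {}"
    and good: "A = I \<or> I - A \<in> blk k0 I ` I"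
    and prim: "primitive_root_unity (card A) w"
  shows "(\<Sum>\<kappa>\<in>{\<kappa>\<in>PiE I (SA A). kerEq I \<kappa> k0}. w ^ (\<Sum>j\<in>A. \<kappa> j)) =
     (-1) ^ (card {B\<in>blk k0 I ` I. B \<subseteq> A} - 1) * fact (card {B\<in>blk k0 I ` I. B \<subseteq> A} - 1) * of_nat (card A)"
proof -
  define T where "T = {B\<in>blk k0 I ` I. B \<subseteq> A}"
  define m where "m = card A"
  have finT: "finite T" using finI by (simp add: T_def)
  have finA: "finite A" using finI AI finite_subset by blast
  have F1: "blk k0 I j \<in> T" if "j \<in> A" for j
  proof -
    have "blk k0 I j \<subseteq> A"
    proof
      fix i assume i: "i \<in> blk k0 I j"
      show "i \<in> A"
      proof (rule ccontr)
        assume "i \<notin> A"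
        with good i have "A \<noteq> I" by (auto simp: blk_def)
        with good obtain d where d: "d \<in> I" "I - A = blk k0 I d" by blast
        have "i \<in> I" using i by (simp add: blk_def)
        hence "i \<in> blk k0 I d" using d(2) \<open>i \<notin> A\<close> by blast
        hence "j \<in> blk k0 I d" using i that AI by (auto simp: blk_def)
        thus False using d that by blast
      qed
    qed
    thus ?thesis using that AI by (auto simp: T_def)
  qed
  have F3: "blk k0 I i = B" if "B \<in> T" "i \<in> B" for B i
    using that by (auto simp: T_def blk_def)
  have BA: "B \<subseteq> A" if "B \<in> T" for B using that by (auto simp: T_def)
  have Bne: "B \<noteq> {}" if "B \<in> T" for B using that by (auto simp: T_def blk_def)
  have grp: "{j \<in> A. blk k0 I j = B} = B" if "B \<in> T" for B
    using F3[OF that] BA[OF that] that AI by (auto simp: T_def blk_def)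
  have blkA: "blk k0 I ` A \<subseteq> T" using F1 by auto
  have cardA: "(\<Sum>B\<in>T. card B) = m"
  proof -
    have "(\<Sum>B\<in>T. card B) = (\<Sum>B\<in>T. \<Sum>j\<in>{j \<in> A. blk k0 I j = B}. 1)"
      by (rule sum.cong) (auto simp: grp)
    also have "\<dots> = (\<Sum>j\<in>A. 1)" by (rule sum.group[OF finA finT blkA])
    finally show ?thesis by (simp add: m_def)
  qed
  have cardT: "card T = Suc (card T - 1)"
  proof -
    obtain j where "j \<in> A" using Ane by auto
    hence "T \<noteq> {}" using F1 by auto
    thus ?thesis using finT by (simp add: card_gt_0_iff)
  qed
  define \<phi> where "\<phi> \<kappa> = (\<lambda>B. if B \<in> T then \<kappa> (SOME j. j \<in> B) else undefined)" for \<kappa> :: "nat \<Rightarrow> nat"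
  define \<psi> where "\<psi> c = (\<lambda>j. if j \<in> A then c (blk k0 I j) else if j \<in> I then 0 else undefined)" for c :: "nat set \<Rightarrow> nat"
  have F4: "\<phi> \<kappa> (blk k0 I j) = \<kappa> j" if "kerEq I \<kappa> k0" "j \<in> A" for \<kappa> j
  proof -
    have "blk k0 I j \<noteq> {}" using that AI by (auto simp: blk_def)
    hence s: "(SOME i. i \<in> blk k0 I j) \<in> blk k0 I j" unfolding some_in_eq by simp
    thus ?thesis using that F1[OF that(2)] AI unfolding \<phi>_def kerEq_def blk_def by auto
  qed
  have "(\<Sum>\<kappa>\<in>{\<kappa>\<in>PiE I (SA A). kerEq I \<kappa> k0}. w ^ (\<Sum>j\<in>A. \<kappa> j)) =
        (\<Sum>c\<in>InjF T m. w ^ (\<Sum>B\<in>T. card B * c B))"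
  proof (rule sum.reindex_bij_witness[where j=\<phi> and i=\<psi>])
    fix \<kappa> assume k: "\<kappa> \<in> {\<kappa>\<in>PiE I (SA A). kerEq I \<kappa> k0}"
    hence ke: "kerEq I \<kappa> k0" and kP: "\<kappa> \<in> PiE I (SA A)" by auto
    show "\<psi> (\<phi> \<kappa>) = \<kappa>"
    proof
      fix j show "\<psi> (\<phi> \<kappa>) j = \<kappa> j"
        using F4[OF ke] kP by (auto simp: \<psi>_def SA_def PiE_def extensional_def Pi_def)
    qed
    show "\<phi> \<kappa> \<in> InjF T m"
    proof -
      have "\<phi> \<kappa> B \<in> {1..m}" if BT: "B \<in> T" for B
      proof -
        obtain j where j: "j \<in> I" "B = blk k0 I j" using BT by (auto simp: T_def)
        have "j \<in> A" using j blk_self[OF j(1)] BA[OF BT] by auto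
        thus ?thesis using F4[OF ke] kP j by (auto simp: SA_def m_def PiE_def Pi_def)
      qed
      moreover have "inj_on (\<phi> \<kappa>) T"
      proof
        fix B1 B2 assume B: "B1 \<in> T" "B2 \<in> T" "\<phi> \<kappa> B1 = \<phi> \<kappa> B2"
        obtain j1 where j1: "j1 \<in> I" "B1 = blk k0 I j1" using B by (auto simp: T_def)
        obtain j2 where j2: "j2 \<in> I" "B2 = blk k0 I j2" using B by (auto simp: T_def)
        have "j1 \<in> A" "j2 \<in> A" using j1 j2 blk_self BA B by blast+
        hence "\<kappa> j1 = \<kappa> j2" using F4[OF ke] B j1 j2 by metis
        hence "k0 j1 = k0 j2" using ke j1 j2 by (auto simp: kerEq_def)
        thus "B1 = B2" using j1 j2 by (simp add: blk_eq_iff)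
      qed
      moreover have "\<phi> \<kappa> \<in> extensional T" by (auto simp: \<phi>_def extensional_def)
      ultimately show ?thesis by (auto simp: InjF_def PiE_def Pi_def)
    qed
    show "w ^ (\<Sum>B\<in>T. card B * \<phi> \<kappa> B) = w ^ (\<Sum>j\<in>A. \<kappa> j)"
    proof -
      have "(\<Sum>B\<in>T. card B * \<phi> \<kappa> B) = (\<Sum>B\<in>T. \<Sum>j\<in>{j \<in> A. blk k0 I j = B}. \<kappa> j)"
      proof (rule sum.cong[OF refl])
        fix B assume B: "B \<in> T"
        have "(\<Sum>j\<in>{j \<in> A. blk k0 I j = B}. \<kappa> j) = (\<Sum>j\<in>{j \<in> A. blk k0 I j = B}. \<phi> \<kappa> B)"
          by (rule sum.cong) (use F4[OF ke] in auto)
        thus "card B * \<phi> \<kappa> B = (\<Sum>j\<in>{j \<in> A. blk k0 I j = B}. \<kappa> j)" using grp[OF B] by simp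
      qed
      also have "\<dots> = (\<Sum>j\<in>A. \<kappa> j)" by (rule sum.group[OF finA finT blkA])
      finally show ?thesis by simp
    qed
  next
    fix c assume c: "c \<in> InjF T m"
    hence cP: "c \<in> PiE T (\<lambda>_. {1..m})" and ci: "inj_on c T" by (auto simp: InjF_def)
    show "\<phi> (\<psi> c) = c"
    proof
      fix B show "\<phi> (\<psi> c) B = c B"
      proof (cases "B \<in> T")
        case True
        hence s: "(SOME i. i \<in> B) \<in> B" using Bne unfolding some_in_eq by simp
        thus ?thesis using True F3[OF True s] BA[OF True] by (auto simp: \<phi>_def \<psi>_def)
      next
        case False
        thus ?thesis using cP by (auto simp: \<phi>_def PiE_def extensional_def)
      qed
    qed
    show "\<psi> c \<in> {\<kappa>\<in>PiE I (SA A). kerEq I \<kappa> k0}"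
    proof -
      have "\<psi> c \<in> PiE I (SA A)"
        using cP F1 AI by (auto simp: \<psi>_def SA_def m_def PiE_def Pi_def extensional_def)
      moreover have "kerEq I (\<psi> c) k0"
        unfolding kerEq_def
      proof (intro ballI)
        fix i j assume ij: "i \<in> I" "j \<in> I"
        show "(\<psi> c i = \<psi> c j) = (k0 i = k0 j)"
        proof (cases "i \<in> A"; cases "j \<in> A")
          assume "i \<in> A" "j \<in> A"
          hence "c (blk k0 I i) = c (blk k0 I j) \<longleftrightarrow> blk k0 I i = blk k0 I j"
            using ci F1 by (simp add: inj_on_eq_iff)
          thus ?thesis using \<open>i \<in> A\<close> \<open>j \<in> A\<close> blk_eq_iff[OF ij] by (simp add: \<psi>_def)
        next
          assume a: "i \<in> A" "j \<notin> A"
          have "c (blk k0 I i) \<ge> 1" using cP F1[OF a(1)] by (auto simp: PiE_def Pi_def)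
          moreover have "k0 i \<noteq> k0 j"
            using F1[OF a(1)] a ij by (auto simp: T_def blk_def)
          ultimately show ?thesis using a ij by (auto simp: \<psi>_def)
        next
          assume a: "i \<notin> A" "j \<in> A"
          have "c (blk k0 I j) \<ge> 1" using cP F1[OF a(2)] by (auto simp: PiE_def Pi_def)
          moreover have "k0 i \<noteq> k0 j"
            using F1[OF a(2)] a ij by (auto simp: T_def blk_def)
          ultimately show ?thesis using a ij by (auto simp: \<psi>_def)
        next
          assume a: "i \<notin> A" "j \<notin> A"
          then obtain d where d: "d \<in> I" "I - A = blk k0 I d" using good ij by auto
          have "k0 i = k0 d" "k0 j = k0 d" using d a ij by (auto simp: blk_def)
          thus ?thesis using a ij by (auto simp: \<psi>_def)
        qed
      qed
      ultimately show ?thesis by simp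
    qed
  qed
  also have "\<dots> = (-1) ^ (card T - 1) * fact (card T - 1) * of_nat m"
  proof (rule G_formula[OF prim[folded m_def] finT cardT])
    show "\<forall>t\<in>T. 0 < card t"
    proof
      fix t assume t: "t \<in> T"
      have "finite t" using t BA finA finite_subset by blast
      thus "0 < card t" using Bne[OF t] by (simp add: card_gt_0_iff)
    qed
    show "(\<Sum>t\<in>T. card t) = m" by (rule cardA)
  qed
  finally show ?thesis by (simp add: T_def m_def)
qed

lemma E_bad:
  assumes AI: "A \<subseteq> I" and bad: "\<not> (A = I \<or> I - A \<in> blk k0 I ` I)"
  shows "{\<kappa>\<in>PiE I (SA A). kerEq I \<kappa> k0} = {}"
proof (rule ccontr)
  assume "{\<kappa>\<in>PiE I (SA A). kerEq I \<kappa> k0} \<noteq> {}"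
  then obtain \<kappa> where kP: "\<kappa> \<in> PiE I (SA A)" and ke: "kerEq I \<kappa> k0" by auto
  from bad AI obtain d where d: "d \<in> I" "d \<notin> A" by auto
  have "I - A = blk k0 I d"
  proof
    show "I - A \<subseteq> blk k0 I d"
    proof
      fix i assume i: "i \<in> I - A"
      have "\<kappa> i = 0" "\<kappa> d = 0" using kP i d by (auto simp: PiE_def Pi_def SA_def)
      thus "i \<in> blk k0 I d" using ke i d by (auto simp: kerEq_def blk_def)
    qed
    show "blk k0 I d \<subseteq> I - A"
    proof
      fix i assume i: "i \<in> blk k0 I d"
      have "\<kappa> d = 0" using kP d by (auto simp: PiE_def Pi_def SA_def)
      hence "\<kappa> i = 0" using ke i d by (auto simp: kerEq_def blk_def)
      moreover have "i \<in> A \<Longrightarrow> \<kappa> i \<noteq> 0" using kP i by (auto simp: PiE_def Pi_def SA_def blk_def)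
      ultimately show "i \<in> I - A" using i by (auto simp: blk_def)
    qed
  qed
  thus False using bad d by auto
qed



lemma c_formula:
  fixes k0 :: "nat \<Rightarrow> nat" and \<omega> :: "nat set \<Rightarrow> complex"
  assumes finI: "finite I" and pI: "p \<in> I"
    and prim: "\<And>A. A \<subseteq> I \<Longrightarrow> p \<in> A \<Longrightarrow> primitive_root_unity (card A) (\<omega> A)"
  shows "(\<Sum>A\<in>{A. A \<subseteq> I \<and> p \<in> A}. (1 / of_nat (card A)) *
            (\<Sum>\<kappa>\<in>{\<kappa>\<in>PiE I (SA A). kerEq I \<kappa> k0}. \<omega> A ^ (\<Sum>j\<in>A. \<kappa> j)))
         = (if kerEq I (\<lambda>_. 0) k0 then 1 else 0)"
proof -
  define Bs where "Bs = blk k0 I ` I"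
  define s where "s = card Bs"
  define r where "r A = card {B\<in>Bs. B \<subseteq> A}" for A
  define Bs' where "Bs' = {D\<in>Bs. p \<notin> D}"
  define Good where "Good = insert I ((\<lambda>D. I - D) ` Bs')"
  have finBs: "finite Bs" using finI by (simp add: Bs_def)
  have Bsub: "D \<subseteq> I" if "D \<in> Bs" for D using that by (auto simp: Bs_def blk_def)
  have Bne: "D \<noteq> {}" if "D \<in> Bs" for D using that by (auto simp: Bs_def blk_def)
  have Bdisj: "D1 = D2 \<or> D1 \<inter> D2 = {}" if "D1 \<in> Bs" "D2 \<in> Bs" for D1 D2
    using that by (auto simp: Bs_def blk_def)
  have finAdm: "finite {A. A \<subseteq> I \<and> p \<in> A}" using finI by simp
  have GoodAdm: "Good \<subseteq> {A. A \<subseteq> I \<and> p \<in> A}" using pI by (auto simp: Good_def Bs'_def)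
  have Good_iff: "A \<in> Good \<longleftrightarrow> (A = I \<or> I - A \<in> Bs)" if "A \<subseteq> I" "p \<in> A" for A
  proof
    assume "A \<in> Good" thus "A = I \<or> I - A \<in> Bs"
      by (auto simp: Good_def Bs'_def double_diff Bsub)
  next
    assume "A = I \<or> I - A \<in> Bs"
    moreover have "A = I - (I - A)" using that by auto
    ultimately show "A \<in> Good" using that unfolding Good_def Bs'_def by blast
  qed
  have termq: "(1 / of_nat (card A)) * (\<Sum>\<kappa>\<in>{\<kappa>\<in>PiE I (SA A). kerEq I \<kappa> k0}. \<omega> A ^ (\<Sum>j\<in>A. \<kappa> j))
      = (if A \<in> Good then (-1) ^ (r A - 1) * fact (r A - 1) else 0)"
    if A: "A \<in> {A. A \<subseteq> I \<and> p \<in> A}" for A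
  proof (cases "A \<in> Good")
    case True
    have "card A > 0" using A finI by (auto simp: card_gt_0_iff finite_subset)
    have AI: "A \<subseteq> I" and pA: "p \<in> A" using A by auto
    have ne: "A \<noteq> {}" using pA by auto
    have gd: "A = I \<or> I - A \<in> blk k0 I ` I" using True Good_iff[OF AI pA] by (simp add: Bs_def)
    note E = E_good[OF finI AI ne gd prim[OF AI pA]]
    have c0: "(of_nat (card A) :: complex) \<noteq> 0" using \<open>card A > 0\<close> by simp
    show ?thesis unfolding E using True c0 by (simp add: r_def Bs_def field_simps)
  next
    case False
    have AI: "A \<subseteq> I" and pA: "p \<in> A" using A by auto
    have "\<not> (A = I \<or> I - A \<in> blk k0 I ` I)" using False Good_iff[OF AI pA] by (simp add: Bs_def)
    from E_bad[OF AI this] show ?thesis using False by (simp only: sum.empty if_False mult_zero_right)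
  qed
  have "(\<Sum>A\<in>{A. A \<subseteq> I \<and> p \<in> A}. (1 / of_nat (card A)) *
            (\<Sum>\<kappa>\<in>{\<kappa>\<in>PiE I (SA A). kerEq I \<kappa> k0}. \<omega> A ^ (\<Sum>j\<in>A. \<kappa> j)))
        = (\<Sum>A\<in>{A. A \<subseteq> I \<and> p \<in> A}. (if A \<in> Good then (-1) ^ (r A - 1) * fact (r A - 1) else 0))"
    by (rule sum.cong[OF refl]) (rule termq)
  also have "\<dots> = (\<Sum>A\<in>Good. (-1) ^ (r A - 1) * fact (r A - 1))"
    using GoodAdm finAdm by (simp add: sum.If_cases Int_absorb1)
  also have "\<dots> = (-1) ^ (r I - 1) * fact (r I - 1) + (\<Sum>A\<in>(\<lambda>D. I - D) ` Bs'. (-1) ^ (r A - 1) * fact (r A - 1))"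
  proof -
    have "I \<notin> (\<lambda>D. I - D) ` Bs'"
    proof
      assume "I \<in> (\<lambda>D. I - D) ` Bs'"
      then obtain D where "D \<in> Bs" "I = I - D" by (auto simp: Bs'_def)
      thus False using Bne Bsub by blast
    qed
    thus ?thesis using finBs by (simp add: Good_def Bs'_def)
  qed
  also have "\<dots> = (-1) ^ (s - 1) * fact (s - 1) + of_nat (s - 1) * ((-1) ^ (s - 2) * fact (s - 2))"
  proof -
    have rI: "r I = s" using Bsub by (auto simp: r_def s_def intro!: arg_cong[where f=card])
    have rD: "r (I - D) = s - 1" if "D \<in> Bs" for D
    proof -
      have "{B\<in>Bs. B \<subseteq> I - D} = Bs - {D}"
        using Bdisj[OF _ that] Bsub Bne[OF that] that by blast
      thus ?thesis using that finBs by (simp add: r_def s_def)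
    qed
    have inj: "inj_on (\<lambda>D. I - D) Bs'"
    proof (rule inj_onI)
      fix x y assume "x \<in> Bs'" "y \<in> Bs'" "I - x = I - y"
      moreover have "x \<subseteq> I" "y \<subseteq> I" using calculation Bsub by (auto simp: Bs'_def)
      ultimately show "x = y" by blast
    qed
    have cBs': "card Bs' = s - 1"
    proof -
      have "Bs' = Bs - {blk k0 I p}"
        using pI by (auto simp: Bs'_def Bs_def blk_def)
      moreover have "blk k0 I p \<in> Bs" using pI by (simp add: Bs_def)
      ultimately show ?thesis using finBs by (simp add: s_def)
    qed
    have "(\<Sum>A\<in>(\<lambda>D. I - D) ` Bs'. (-1) ^ (r A - 1) * fact (r A - 1) :: complex)
          = (\<Sum>D\<in>Bs'. (-1) ^ (s - 2) * fact (s - 2))"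
      by (subst sum.reindex[OF inj]) (auto intro!: sum.cong simp: rD Bs'_def numeral_2_eq_2)
    also have "\<dots> = of_nat (s - 1) * ((-1) ^ (s - 2) * fact (s - 2))" by (simp add: cBs')
    finally show ?thesis by (simp add: rI)
  qed
  also have "\<dots> = (if kerEq I (\<lambda>_. 0) k0 then 1 else 0)"
  proof -
    have "blk k0 I p \<in> Bs" using pI by (simp add: Bs_def)
    hence "Bs \<noteq> {}" by blast
    hence "card Bs \<noteq> 0" using finBs by simp
    hence s1: "s \<ge> 1" unfolding s_def by linarith
    have "kerEq I (\<lambda>_. 0) k0 \<longleftrightarrow> s = 1"
    proof (rule iffI)
      assume ke: "kerEq I (\<lambda>_. 0) k0"
      have allp: "k0 i = k0 p" if "i \<in> I" for i using ke pI that unfolding kerEq_def by blast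
      have bp: "blk k0 I i = blk k0 I p" if i: "i \<in> I" for i
        using blk_eq_iff[OF i pI] allp[OF i] by blast
      have "Bs = {blk k0 I p}"
      proof
        show "Bs \<subseteq> {blk k0 I p}" unfolding Bs_def using bp by blast
        show "{blk k0 I p} \<subseteq> Bs" unfolding Bs_def using pI by blast
      qed
      thus "s = 1" by (simp add: s_def)
    next
      assume "s = 1"
      hence "card Bs = 1" by (simp add: s_def)
      then obtain D where D: "Bs = {D}" by (rule card_1_singletonE)
      have bb: "blk k0 I i = blk k0 I j" if "i \<in> I" "j \<in> I" for i j
      proof -
        have "blk k0 I i \<in> Bs" "blk k0 I j \<in> Bs" using that by (auto simp: Bs_def)
        thus ?thesis using D by simp
      qed
      show "kerEq I (\<lambda>_. 0) k0"
        unfolding kerEq_def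
      proof (intro ballI)
        fix i j assume ij: "i \<in> I" "j \<in> I"
        have "k0 i = k0 j" using bb[OF ij] blk_eq_iff[OF ij] by simp
        thus "((0::nat) = 0) = (k0 i = k0 j)" by simp
      qed
    qed
    moreover have "(-1) ^ (s - 1) * fact (s - 1) + of_nat (s - 1) * ((-1) ^ (s - 2) * fact (s - 2)) = (0::complex)"
      if "s \<ge> 2"
    proof -
      obtain t where t: "s = Suc (Suc t)" using \<open>s \<ge> 2\<close> by (metis add_2_eq_Suc le_Suc_ex)
      show ?thesis by (simp add: t algebra_simps)
    qed
    ultimately show ?thesis using s1 by (cases "s = 1") auto
  qed
  finally show ?thesis .
qed



lemma prod_list_scale:
  fixes sc :: "complex \<Rightarrow> 'u::ring_1 \<Rightarrow> 'u"
  assumes "complex_unital_algebra sc"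
  shows "prod_list (map (\<lambda>j. sc (a j) (y j)) js) = sc (prod_list (map a js)) (prod_list (map y js))"
proof -
  have vs: "vector_space sc" and cm: "\<And>c a b. sc c (a * b) = sc c a * b" "\<And>c a b. sc c (a * b) = a * sc c b"
    using assms unfolding complex_unital_algebra_def by blast+
  interpret U: vector_space sc by (rule vs)
  show ?thesis
  proof (induction js)
    case Nil show ?case by simp
  next
    case (Cons j js)
    have "sc (a j) (y j) * sc (prod_list (map a js)) (prod_list (map y js))
        = sc (a j) (sc (prod_list (map a js)) (y j * prod_list (map y js)))"
      by (metis cm U.scale_left_commute)
    thus ?case using Cons by (simp add: mult.commute)
  qed
qed

lemma hom_prod_list:
  assumes "\<And>a b. f (a * b) = f a * f b" "f 1 = 1"
  shows "f (prod_list (map X js)) = prod_list (map (\<lambda>j. f (X j)) js)"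
  by (induction js) (simp_all add: assms)

theorem proposition3p9:
  fixes scA :: "complex \<Rightarrow> 'a::ring_1 \<Rightarrow> 'a" and phi :: "'a \<Rightarrow> complex"
    and scU :: "complex \<Rightarrow> 'u::ring_1 \<Rightarrow> 'u" and phit :: "'u \<Rightarrow> complex"
    and iota :: "nat \<Rightarrow> 'a \<Rightarrow> 'u"
    and X :: "nat \<Rightarrow> 'a" and n :: nat
    and \<omega> :: "nat set \<Rightarrow> complex"
  assumes "nc_prob_space scA phi"
    and "exchangeability_system scA phi scU phit iota"
    and "n \<ge> 1"
    and "\<And>A. A \<subseteq> {1..n} \<Longrightarrow> 1 \<in> A \<Longrightarrow> primitive_root_unity (card A) (\<omega> A)"
  shows "phi (prod_list (map X [1..<n+1])) =
    (\<Sum>A | A \<subseteq> {1..n} \<and> 1 \<in> A.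
       (1 / of_nat (card A)) * phit (prod_list (map (\<lambda>j. XA scU iota A (\<omega> A) (X j) j) [1..<n+1])))"
proof -
  define I where "I = {1..n}"
  define P where "P \<kappa> = phit (prod_list (map (\<lambda>j. iota (\<kappa> j) (X j)) [1..<n+1]))" for \<kappa> :: "nat \<Rightarrow> nat"
  have ncU: "nc_prob_space scU phit"
    and emb: "\<And>k. unital_alg_embedding scA scU (iota k)" "\<And>k. phit \<circ> iota k = phi"
    and exch: "\<forall>(n::nat) (X::nat \<Rightarrow> 'a) (i::nat \<Rightarrow> nat) (\<sigma>::nat \<Rightarrow> nat). bij \<sigma> \<longrightarrow>
        phit (prod_list (map (\<lambda>j. iota (i j) (X j)) [0..<n])) =
        phit (prod_list (map (\<lambda>j. iota (\<sigma> (i j)) (X j)) [0..<n]))"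
    using assms(2) unfolding exchangeability_system_def by blast+
  have cua: "complex_unital_algebra scU" and lin: "Vector_Spaces.linear scU (*) phit"
    using ncU unfolding nc_prob_space_def by blast+
  have vsU: "vector_space scU" using cua unfolding complex_unital_algebra_def by blast
  interpret U: vector_space scU by (rule vsU)
  interpret L: Vector_Spaces.linear scU "(*)" phit by (rule lin)
  have setI: "set [1..<n+1] = I" by (auto simp: I_def)
  have finI: "finite I" by (simp add: I_def)
  have oneI: "1 \<in> I" using assms(3) by (simp add: I_def)
  have upt_shift: "map f [1..<n+1] = map (\<lambda>j. f (Suc j)) [0..<n]" for f :: "nat \<Rightarrow> 'u"
    by (simp add: map_Suc_upt[symmetric] del: upt_Suc)

  have Pinv: "P \<kappa> = P \<kappa>'" if ke: "kerEq I \<kappa> \<kappa>'" for \<kappa> \<kappa>'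
  proof -
    define f where "f v = \<kappa>' (inv_into I \<kappa> v)" for v
    have fk: "f (\<kappa> j) = \<kappa>' j" if "j \<in> I" for j
    proof -
      have "inv_into I \<kappa> (\<kappa> j) \<in> I" "\<kappa> (inv_into I \<kappa> (\<kappa> j)) = \<kappa> j"
        using that by (auto intro: inv_into_into f_inv_into_f)
      thus ?thesis using ke that unfolding f_def kerEq_def by metis
    qed
    have "inj_on f (\<kappa> ` I)"
    proof (rule inj_onI)
      fix x y assume "x \<in> \<kappa> ` I" "y \<in> \<kappa> ` I" "f x = f y"
      then obtain a b where "a \<in> I" "b \<in> I" "x = \<kappa> a" "y = \<kappa> b" "\<kappa>' a = \<kappa>' b" using fk by auto
      thus "x = y" using ke unfolding kerEq_def by auto
    qed
    then obtain \<sigma> where \<sigma>: "bij \<sigma>" "\<forall>x\<in>\<kappa> ` I. \<sigma> x = f x"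
      using bij_extend_nat[of "\<kappa> ` I" f] finI by auto
    have "P \<kappa> = phit (prod_list (map (\<lambda>j. iota (\<kappa> (Suc j)) (X (Suc j))) [0..<n]))"
      unfolding P_def by (simp only: upt_shift)
    also have "\<dots> = phit (prod_list (map (\<lambda>j. iota (\<sigma> (\<kappa> (Suc j))) (X (Suc j))) [0..<n]))"
      using spec[OF spec[OF spec[OF spec[OF exch, of n], of "\<lambda>j. X (Suc j)"], of "\<lambda>j. \<kappa> (Suc j)"], of \<sigma>] \<sigma>(1)
      by simp
    also have "\<dots> = phit (prod_list (map (\<lambda>j. iota (\<kappa>' (Suc j)) (X (Suc j))) [0..<n]))"
    proof -
      have "map (\<lambda>j. iota (\<sigma> (\<kappa> (Suc j))) (X (Suc j))) [0..<n] = map (\<lambda>j. iota (\<kappa>' (Suc j)) (X (Suc j))) [0..<n]"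
        by (rule map_cong[OF refl]) (use \<sigma>(2) fk in \<open>auto simp: I_def\<close>)
      thus ?thesis by (rule arg_cong[where f="\<lambda>x. phit (prod_list x)"])
    qed
    also have "\<dots> = P \<kappa>'" unfolding P_def by (simp only: upt_shift)
    finally show ?thesis .
  qed

  have lhs: "phi (prod_list (map X [1..<n+1])) = P (\<lambda>_. 0)"
  proof -
    have h: "\<And>a b. iota 0 (a * b) = iota 0 a * iota 0 b" "iota 0 1 = 1"
      using emb(1)[of 0] unfolding unital_alg_embedding_def by blast+
    have "phi (prod_list (map X [1..<n+1])) = phit (iota 0 (prod_list (map X [1..<n+1])))"
      using emb(2)[of 0] by (metis comp_apply)
    also have "\<dots> = P (\<lambda>_. 0)" unfolding P_def hom_prod_list[OF h] ..
    finally show ?thesis .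
  qed

  have expand: "phit (prod_list (map (\<lambda>j. XA scU iota A (\<omega> A) (X j) j) [1..<n+1])) =
      (\<Sum>\<kappa>\<in>PiE I (SA A). \<omega> A ^ (\<Sum>j\<in>A. \<kappa> j) * P \<kappa>)" if AI: "A \<subseteq> I" for A
  proof -
    define cf where "cf j k = (if j \<in> A then \<omega> A ^ k else 1)" for j k :: nat
    have xa: "XA scU iota A (\<omega> A) (X j) j = (\<Sum>k\<in>SA A j. scU (cf j k) (iota k (X j)))" for j
      by (simp add: XA_def SA_def cf_def)
    have "prod_list (map (\<lambda>j. XA scU iota A (\<omega> A) (X j) j) [1..<n+1]) =
       (\<Sum>\<kappa>\<in>PiE I (SA A). prod_list (map (\<lambda>j. scU (cf j (\<kappa> j)) (iota (\<kappa> j) (X j))) [1..<n+1]))"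
      unfolding xa prod_list_sum_expand[OF distinct_upt] setI ..
    also have "\<dots> = (\<Sum>\<kappa>\<in>PiE I (SA A). scU (prod_list (map (\<lambda>j. cf j (\<kappa> j)) [1..<n+1]))
                         (prod_list (map (\<lambda>j. iota (\<kappa> j) (X j)) [1..<n+1])))"
      by (simp only: prod_list_scale[OF cua])
    finally have "phit (prod_list (map (\<lambda>j. XA scU iota A (\<omega> A) (X j) j) [1..<n+1])) =
       (\<Sum>\<kappa>\<in>PiE I (SA A). prod_list (map (\<lambda>j. cf j (\<kappa> j)) [1..<n+1]) * P \<kappa>)"
      by (simp add: L.sum L.scale P_def)
    also have "\<dots> = (\<Sum>\<kappa>\<in>PiE I (SA A). \<omega> A ^ (\<Sum>j\<in>A. \<kappa> j) * P \<kappa>)"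
    proof (rule sum.cong[OF refl])
      fix \<kappa> :: "nat \<Rightarrow> nat"
      have "prod_list (map (\<lambda>j. cf j (\<kappa> j)) [1..<n+1]) = (\<Prod>j\<in>I. cf j (\<kappa> j))"
        using prod.distinct_set_conv_list[OF distinct_upt, of "\<lambda>j. cf j (\<kappa> j)" 1 "n+1"]
        unfolding setI by simp
      also have "\<dots> = (\<Prod>j\<in>I \<inter> A. \<omega> A ^ \<kappa> j)"
        unfolding cf_def by (rule prod.inter_restrict[symmetric]) (rule finI)
      also have "\<dots> = \<omega> A ^ (\<Sum>j\<in>A. \<kappa> j)" using AI by (simp add: power_sum Int_absorb1)
      finally show "prod_list (map (\<lambda>j. cf j (\<kappa> j)) [1..<n+1]) * P \<kappa> = \<omega> A ^ (\<Sum>j\<in>A. \<kappa> j) * P \<kappa>"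
        by simp
    qed
    finally show ?thesis .
  qed

  define kr where "kr \<kappa> = {(i, j). i \<in> I \<and> j \<in> I \<and> \<kappa> i = \<kappa> j}" for \<kappa> :: "nat \<Rightarrow> nat"
  define Rs where "Rs = range kr"
  define rep where "rep R = (SOME \<kappa>. kr \<kappa> = R)" for R
  have finRs: "finite Rs"
    by (rule finite_subset[of _ "Pow (I \<times> I)"]) (auto simp: Rs_def kr_def finI)
  have kr_rep: "kr (rep R) = R" if "R \<in> Rs" for R
    using that unfolding Rs_def rep_def by (metis (mono_tags) rangeE someI_ex)
  have kr_eq: "kr \<kappa> = kr \<kappa>' \<longleftrightarrow> kerEq I \<kappa> \<kappa>'" for \<kappa> \<kappa>'
    unfolding kr_def kerEq_def by (auto simp: set_eq_iff)
  have grp: "(\<Sum>\<kappa>\<in>K. w \<kappa> * P \<kappa>) = (\<Sum>R\<in>Rs. P (rep R) * (\<Sum>\<kappa>\<in>{\<kappa>\<in>K. kerEq I \<kappa> (rep R)}. w \<kappa>))"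
    if finK: "finite K" for K and w :: "(nat \<Rightarrow> nat) \<Rightarrow> complex"
  proof -
    have "(\<Sum>\<kappa>\<in>K. w \<kappa> * P \<kappa>) = (\<Sum>R\<in>Rs. \<Sum>\<kappa>\<in>{\<kappa>\<in>K. kr \<kappa> = R}. w \<kappa> * P \<kappa>)"
      by (rule sum.group[symmetric, OF finK finRs]) (auto simp: Rs_def)
    also have "\<dots> = (\<Sum>R\<in>Rs. P (rep R) * (\<Sum>\<kappa>\<in>{\<kappa>\<in>K. kerEq I \<kappa> (rep R)}. w \<kappa>))"
    proof (rule sum.cong[OF refl])
      fix R assume R: "R \<in> Rs"
      have eqset: "{\<kappa>\<in>K. kr \<kappa> = R} = {\<kappa>\<in>K. kerEq I \<kappa> (rep R)}"
        using kr_rep[OF R] kr_eq by auto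
      have "(\<Sum>\<kappa>\<in>{\<kappa>\<in>K. kerEq I \<kappa> (rep R)}. w \<kappa> * P \<kappa>) = (\<Sum>\<kappa>\<in>{\<kappa>\<in>K. kerEq I \<kappa> (rep R)}. w \<kappa> * P (rep R))"
        by (rule sum.cong[OF refl]) (use Pinv in auto)
      thus "(\<Sum>\<kappa>\<in>{\<kappa>\<in>K. kr \<kappa> = R}. w \<kappa> * P \<kappa>) = P (rep R) * (\<Sum>\<kappa>\<in>{\<kappa>\<in>K. kerEq I \<kappa> (rep R)}. w \<kappa>)"
        unfolding eqset by (simp add: sum_distrib_left sum_distrib_right mult.commute)
    qed
    finally show ?thesis .
  qed
  have finK: "finite (PiE I (SA A))" for A
    by (rule finite_PiE[OF finI]) (simp add: SA_def)
  have primI: "\<And>A. A \<subseteq> I \<Longrightarrow> 1 \<in> A \<Longrightarrow> primitive_root_unity (card A) (\<omega> A)"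
    using assms(4) by (simp add: I_def)
  have "(\<Sum>A | A \<subseteq> {1..n} \<and> 1 \<in> A.
       (1 / of_nat (card A)) * phit (prod_list (map (\<lambda>j. XA scU iota A (\<omega> A) (X j) j) [1..<n+1])))
     = (\<Sum>A\<in>{A. A \<subseteq> I \<and> 1 \<in> A}. (1 / of_nat (card A)) *
          (\<Sum>R\<in>Rs. P (rep R) * (\<Sum>\<kappa>\<in>{\<kappa>\<in>PiE I (SA A). kerEq I \<kappa> (rep R)}. \<omega> A ^ (\<Sum>j\<in>A. \<kappa> j))))"
    unfolding I_def[symmetric]
  proof (rule sum.cong[OF refl])
    fix A assume "A \<in> {A. A \<subseteq> I \<and> 1 \<in> A}"
    hence AI: "A \<subseteq> I" by simp
    show "(1 / of_nat (card A)) * phit (prod_list (map (\<lambda>j. XA scU iota A (\<omega> A) (X j) j) [1..<n+1])) =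
      (1 / of_nat (card A)) * (\<Sum>R\<in>Rs. P (rep R) * (\<Sum>\<kappa>\<in>{\<kappa>\<in>PiE I (SA A). kerEq I \<kappa> (rep R)}. \<omega> A ^ (\<Sum>j\<in>A. \<kappa> j)))"
      unfolding expand[OF AI] grp[OF finK] ..
  qed
  also have "\<dots> = (\<Sum>R\<in>Rs. P (rep R) * (\<Sum>A\<in>{A. A \<subseteq> I \<and> 1 \<in> A}. (1 / of_nat (card A)) *
          (\<Sum>\<kappa>\<in>{\<kappa>\<in>PiE I (SA A). kerEq I \<kappa> (rep R)}. \<omega> A ^ (\<Sum>j\<in>A. \<kappa> j))))"
    by (simp add: sum_distrib_left sum.swap[of _ Rs] mult.left_commute)
  also have "\<dots> = (\<Sum>R\<in>Rs. P (rep R) * (if kerEq I (\<lambda>_. 0) (rep R) then 1 else 0))"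
    by (rule sum.cong[OF refl]) (simp only: c_formula[OF finI oneI primI])
  also have "\<dots> = (\<Sum>R\<in>Rs. if R = kr (\<lambda>_. 0) then P (rep R) else 0)"
  proof (rule sum.cong[OF refl])
    fix R assume R: "R \<in> Rs"
    have "kerEq I (\<lambda>_. 0) (rep R) \<longleftrightarrow> R = kr (\<lambda>_. 0)"
      using kr_eq[of "\<lambda>_. 0" "rep R"] kr_rep[OF R] by auto
    thus "P (rep R) * (if kerEq I (\<lambda>_. 0) (rep R) then 1 else 0) = (if R = kr (\<lambda>_. 0) then P (rep R) else 0)"
      by simp
  qed
  also have "\<dots> = P (rep (kr (\<lambda>_. 0)))"
    using finRs by (simp add: Rs_def)
  also have "\<dots> = P (\<lambda>_. 0)"
    by (rule Pinv) (use kr_eq kr_rep[of "kr (\<lambda>_. 0)"] in \<open>auto simp: Rs_def\<close>)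
  finally show ?thesis using lhs by simp
qed
end
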